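(* Let $\alpha\in(1,e/2)$. Consider a 2-armed Gaussian bandit with unit-variance rewards of means $\mu_1\neq\mu_2$ and cost means $c_1,c_2$. For $\delta\in(0,1)$ let $\tau_\delta$ be the stopping time of the Chernoff-Overlap algorithm with parameters $\delta,\alpha,B$ (all runs built on the same underlying sequence of observations). Then with probability $1$, \[ \limsup_{\delta\to0}\frac{J(\tau_\delta)}{\log(1/\delta)}\le\frac{2\alpha(\sqrt{c_1}+\sqrt{c_2})^2}{(\mu_1-\mu_2)^2}. \]
   Context: Two arms $\{1,2\}$; arm $a$ has reward distribution $\mathcal{N}(\mu_a,1)$ and cost distribution with mean $c_a$ supported in $[\ell,1]$, $\ell>0$. At round $t$ the algorithm pulls $A_t$ and observes independent reward $R_t$ and cost $C_t$ from arm $A_t$; $J(t)=\sum_{k\le t}C_k$. $d(\mu,\mu')=(\mu-\mu')^2/2$. $N_a(t)$ is the number of pulls, $\hat\mu_a(t),\hat c_a(t)$ empirical means, $\hat\mu_{a,b}(t)=\frac{N_a(t)\hat\mu_a(t)+N_b(t)\hat\mu_b(t)}{N_a(t)+N_b(t)}$, $Z_{a,b}(t)=N_a(t)d(\hat\mu_a(t),\hat\mu_{a,b}(t))+N_b(t)d(\hat\mu_b(t),\hat\mu_{a,b}(t))$. Chernoff-Overlap (CO) algorithm (parameters $\delta$, $\alpha$, a constant $B>0$): maintain remaining set $\mathcal{R}$, initially all arms; pull each arm once; then at each subsequent $t$: if $|\mathcal{R}|\le1$ stop; otherwise with $a^*(t)=\arg\max_a\hat\mu_a(t)$ remove every $a$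 with $Z_{a^*(t),a}(t)>\log(Bt^\alpha/\delta)$ from $\mathcal{R}$, and pull an arm in $\arg\min_{a\in\mathcal{R}}\sqrt{\hat c_a(t)}N_a(t)$; output the remaining arm. *)

theory Defs
  imports "HOL-Probability.Probability"
begin

text \<open>Arms are 1 and 2.
  r a k and c a k are the reward and cost observed at the (k+1)-th pull of arm a
  (k = 0,1,...). A state is (N, Rem): the pull counts N a and the remaining set.\<close>

definition dG :: "real \<Rightarrow> real \<Rightarrow> real" where
  "dG x y = (x - y)^2 / 2"

definition emp :: "(nat \<Rightarrow> nat \<Rightarrow> real) \<Rightarrow> nat \<Rightarrow> nat \<Rightarrow> real" where
  "emp x a n = (\<Sum>k<n. x a k) / real n"

definition Zstat :: "(nat \<Rightarrow> nat \<Rightarrow> real) \<Rightarrow> (nat \<Rightarrow> nat) \<Rightarrow> nat \<Rightarrow> nat \<Rightarrow> real" where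
  "Zstat r N a b =
     (let m = (real (N a) * emp r a (N a) + real (N b) * emp r b (N b)) / real (N a + N b)
      in real (N a) * dG (emp r a (N a)) m + real (N b) * dG (emp r b (N b)) m)"

definition best_arm :: "(nat \<Rightarrow> nat \<Rightarrow> real) \<Rightarrow> (nat \<Rightarrow> nat) \<Rightarrow> nat" where
  "best_arm r N = (if emp r 2 (N 2) > emp r 1 (N 1) then 2 else 1)"

text \<open>Arm pulled: argmin over Rem of sqrt(hat c_a) N_a (ties towards arm 1;
  if Rem is empty the choice is irrelevant since the algorithm stops next round).\<close>
definition pull_arm :: "(nat \<Rightarrow> nat \<Rightarrow> real) \<Rightarrow> (nat \<Rightarrow> nat) \<Rightarrow> nat set \<Rightarrow> nat" where
  "pull_arm c N Rem =
     (if 1 \<in> Rem \<and> 2 \<in> Rem then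
        (if sqrt (emp c 2 (N 2)) * real (N 2) < sqrt (emp c 1 (N 1)) * real (N 1) then 2 else 1)
      else if 2 \<in> Rem then 2 else 1)"

definition co_step :: "real \<Rightarrow> real \<Rightarrow> real \<Rightarrow> (nat \<Rightarrow> nat \<Rightarrow> real) \<Rightarrow> (nat \<Rightarrow> nat \<Rightarrow> real)
    \<Rightarrow> (nat \<Rightarrow> nat) \<times> nat set \<Rightarrow> (nat \<Rightarrow> nat) \<times> nat set" where
  "co_step \<delta> \<alpha> B r c st =
     (let N = fst st; Rem = snd st; t = real (N 1 + N 2); a0 = best_arm r N;
          Rem' = {a \<in> Rem. \<not> (Zstat r N a0 a > ln (B * t powr \<alpha> / \<delta>))};
          a = pull_arm c N Rem'
      in (N(a := N a + 1), Rem'))"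

definition co_state :: "real \<Rightarrow> real \<Rightarrow> real \<Rightarrow> (nat \<Rightarrow> nat \<Rightarrow> real) \<Rightarrow> (nat \<Rightarrow> nat \<Rightarrow> real)
    \<Rightarrow> nat \<Rightarrow> (nat \<Rightarrow> nat) \<times> nat set" where
  "co_state \<delta> \<alpha> B r c k =
     (co_step \<delta> \<alpha> B r c ^^ k) ((\<lambda>a. if a \<in> {1,2} then 1 else 0), {1,2})"

definition co_stops :: "real \<Rightarrow> real \<Rightarrow> real \<Rightarrow> (nat \<Rightarrow> nat \<Rightarrow> real) \<Rightarrow> (nat \<Rightarrow> nat \<Rightarrow> real)
    \<Rightarrow> nat \<Rightarrow> bool" where
  "co_stops \<delta> \<alpha> B r c k \<longleftrightarrow> card (snd (co_state \<delta> \<alpha> B r c k)) \<le> 1"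

definition total_cost :: "(nat \<Rightarrow> nat \<Rightarrow> real) \<Rightarrow> (nat \<Rightarrow> nat) \<Rightarrow> real" where
  "total_cost c N = (\<Sum>a\<in>{1,2}. \<Sum>k<N a. c a k)"

definition co_J_tau :: "real \<Rightarrow> real \<Rightarrow> real \<Rightarrow> (nat \<Rightarrow> nat \<Rightarrow> real) \<Rightarrow> (nat \<Rightarrow> nat \<Rightarrow> real) \<Rightarrow> ereal" where
  "co_J_tau \<delta> \<alpha> B r c =
     (if \<exists>k. co_stops \<delta> \<alpha> B r c k
      then ereal (total_cost c (fst (co_state \<delta> \<alpha> B r c (LEAST k. co_stops \<delta> \<alpha> B r c k))))
      else \<infinity>)"

end

theory Submission
  imports Defs
begin


definition pulled :: "(nat \<Rightarrow> nat \<Rightarrow> real) \<Rightarrow> (nat \<Rightarrow> nat) \<Rightarrow> nat" where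
  "pulled c N = (if sqrt (emp c 2 (N 2)) * real (N 2) < sqrt (emp c 1 (N 1)) * real (N 1) then 2 else 1)"

definition fstep :: "(nat \<Rightarrow> nat \<Rightarrow> real) \<Rightarrow> (nat \<Rightarrow> nat) \<Rightarrow> (nat \<Rightarrow> nat)" where
  "fstep c N = N(pulled c N := N (pulled c N) + 1)"

definition N0 :: "nat \<Rightarrow> nat" where
  "N0 = (\<lambda>a. if a \<in> {1,2} then 1 else 0)"

definition Nf :: "(nat \<Rightarrow> nat \<Rightarrow> real) \<Rightarrow> nat \<Rightarrow> (nat \<Rightarrow> nat)" where
  "Nf c k = (fstep c ^^ k) N0"

lemma Nf_0: "Nf c 0 = N0" by (simp add: Nf_def)
lemma Nf_Suc: "Nf c (Suc k) = fstep c (Nf c k)" by (simp add: Nf_def)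

lemma pull_arm_12: "pull_arm c N {1,2} = pulled c N"
  unfolding pull_arm_def pulled_def by simp

lemma pull_arm_in: "pull_arm c N Rem \<in> {1,2}"
  by (simp add: pull_arm_def)

lemma Nf_props: "Nf c k 1 + Nf c k 2 = k + 2 \<and> Nf c k 1 \<ge> 1 \<and> Nf c k 2 \<ge> 1"
proof (induction k)
  case 0 then show ?case by (simp add: Nf_0 N0_def)
next
  case (Suc k)
  then show ?case by (auto simp: Nf_Suc fstep_def pulled_def)
qed

lemma Nf_Suc1: "Nf c (Suc k) 1 = (if sqrt (emp c 2 (Nf c k 2)) * real (Nf c k 2) < sqrt (emp c 1 (Nf c k 1)) * real (Nf c k 1) then Nf c k 1 else Nf c k 1 + 1)"
  by (simp add: Nf_Suc fstep_def pulled_def)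

lemma Nf_Suc2: "Nf c (Suc k) 2 = (if sqrt (emp c 2 (Nf c k 2)) * real (Nf c k 2) < sqrt (emp c 1 (Nf c k 1)) * real (Nf c k 1) then Nf c k 2 + 1 else Nf c k 2)"
  by (simp add: Nf_Suc fstep_def pulled_def)

lemma Zstat_same: "N a > 0 \<Longrightarrow> Zstat r N a a = 0"
  by (simp add: Zstat_def dG_def Let_def field_simps)

lemma Zstat_sym: "Zstat r N a b = Zstat r N b a"
  by (simp add: Zstat_def Let_def add.commute)

lemma best_arm_in: "best_arm r N \<in> {1,2}"
  by (simp add: best_arm_def)

lemma Rem_12:
  assumes "N 1 > 0" "N 2 > 0" "th \<ge> 0"
  shows "{a \<in> {1,2::nat}. \<not> Zstat r N (best_arm r N) a > th} =
     (if Zstat r N 1 2 \<le> th then {1,2} else {best_arm r N})"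
proof -
  have b: "best_arm r N = 1 \<or> best_arm r N = 2" using best_arm_in[of r N] by auto
  show ?thesis using b assms Zstat_same[of N 1 r] Zstat_same[of N 2 r] Zstat_sym[of r N 1 2]
    by (auto)
qed

definition noel :: "real \<Rightarrow> real \<Rightarrow> real \<Rightarrow> (nat \<Rightarrow> nat \<Rightarrow> real) \<Rightarrow> (nat \<Rightarrow> nat) \<Rightarrow> bool" where
  "noel \<delta> \<alpha> B r N \<longleftrightarrow> Zstat r N 1 2 \<le> ln (B * real (N 1 + N 2) powr \<alpha> / \<delta>)"

lemma thr_nonneg:
  assumes "0 < \<delta>" "\<delta> \<le> B" "0 \<le> \<alpha>" "(t::real) \<ge> 1"
  shows "0 \<le> ln (B * t powr \<alpha> / \<delta>)"
proof -
  have "t powr \<alpha> \<ge> 1" using assms by (intro ge_one_powr_ge_zero) auto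
  then have "B * 1 \<le> B * t powr \<alpha>" by (rule mult_left_mono) (use assms in auto)
  then have "B * t powr \<alpha> \<ge> \<delta>" using assms by linarith
  then have "B * t powr \<alpha> / \<delta> \<ge> 1" using assms by (simp add: divide_simps)
  then show ?thesis by simp
qed

lemma co_step_noel:
  assumes "0 < \<delta>" "\<delta> \<le> B" "0 \<le> \<alpha>" "noel \<delta> \<alpha> B r (Nf c k)"
  shows "co_step \<delta> \<alpha> B r c (Nf c k, {1,2}) = (Nf c (Suc k), {1,2})"
proof -
  have p: "Nf c k 1 > 0" "Nf c k 2 > 0" using Nf_props[of c k] by auto
  have th: "0 \<le> ln (B * real (Nf c k 1 + Nf c k 2) powr \<alpha> / \<delta>)"
    using thr_nonneg[OF assms(1-3)] Nf_props[of c k] by simp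
  show ?thesis using Rem_12[OF p th, of r] assms(4)
    unfolding co_step_def Let_def noel_def Nf_Suc fstep_def
    by (simp only: fst_conv snd_conv if_True pull_arm_12 prod.inject)
qed

lemma co_step_el:
  assumes "0 < \<delta>" "\<delta> \<le> B" "0 \<le> \<alpha>" "\<not> noel \<delta> \<alpha> B r (Nf c k)"
  shows "\<exists>a. co_step \<delta> \<alpha> B r c (Nf c k, {1,2}) = ((Nf c k)(a := Nf c k a + 1), {best_arm r (Nf c k)})
     \<and> a \<in> {1,2}"
proof -
  have p: "Nf c k 1 > 0" "Nf c k 2 > 0" using Nf_props[of c k] by auto
  have th: "0 \<le> ln (B * real (Nf c k 1 + Nf c k 2) powr \<alpha> / \<delta>)"
    using thr_nonneg[OF assms(1-3)] Nf_props[of c k] by simp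
  show ?thesis using Rem_12[OF p th, of r] assms(4) pull_arm_in[of c "Nf c k" "{best_arm r (Nf c k)}"]
    by (simp add: co_step_def Let_def noel_def) blast
qed

lemma co_state_traj:
  assumes "0 < \<delta>" "\<delta> \<le> B" "0 \<le> \<alpha>" "\<forall>j<k. noel \<delta> \<alpha> B r (Nf c j)"
  shows "co_state \<delta> \<alpha> B r c k = (Nf c k, {1,2})"
  using assms(4)
proof (induction k)
  case 0 then show ?case by (simp add: co_state_def Nf_0 N0_def)
next
  case (Suc k)
  have "co_state \<delta> \<alpha> B r c (Suc k) = co_step \<delta> \<alpha> B r c (co_state \<delta> \<alpha> B r c k)"
    by (simp add: co_state_def)
  also have "\<dots> = co_step \<delta> \<alpha> B r c (Nf c k, {1,2})" using Suc by simp
  also have "\<dots> = (Nf c (Suc k), {1,2})" using co_step_noel[OF assms(1-3)] Suc.prems by simp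
  finally show ?case .
qed




lemma total_cost_upd:
  assumes "a \<in> {1,2::nat}"
  shows "total_cost c (N(a := N a + 1)) = total_cost c N + c a (N a)"
  using assms by (auto simp: total_cost_def)

lemma pulled_in: "pulled c N \<in> {1,2}" by (simp add: pulled_def)

lemma total_cost_Nf_Suc:
  assumes "\<And>a k. a \<in> {1,2} \<Longrightarrow> c a k \<le> 1"
  shows "total_cost c (Nf c (Suc k)) \<le> total_cost c (Nf c k) + 1"
  using total_cost_upd[OF pulled_in[of c "Nf c k"], of c] assms[OF pulled_in[of c "Nf c k"]]
  by (simp add: Nf_Suc fstep_def)

lemma co_stops_traj:
  assumes "0 < \<delta>" "\<delta> \<le> B" "0 \<le> \<alpha>" "\<forall>j<k. noel \<delta> \<alpha> B r (Nf c j)"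
  shows "\<not> co_stops \<delta> \<alpha> B r c k"
  using co_state_traj[OF assms] by (simp add: co_stops_def)

lemma co_J_tau_bound:
  assumes "0 < \<delta>" "\<delta> \<le> B" "0 \<le> \<alpha>" "\<not> noel \<delta> \<alpha> B r (Nf c k0)"
    and cle: "\<And>a k. a \<in> {1,2} \<Longrightarrow> c a k \<le> 1"
  shows "\<exists>ks J. (\<forall>j<ks. noel \<delta> \<alpha> B r (Nf c j)) \<and> co_J_tau \<delta> \<alpha> B r c = ereal J
     \<and> J \<le> total_cost c (Nf c ks) + 1"
proof -
  define ks where "ks = (LEAST k. \<not> noel \<delta> \<alpha> B r (Nf c k))"
  have nks: "\<not> noel \<delta> \<alpha> B r (Nf c ks)" unfolding ks_def by (rule LeastI[of _ k0]) (rule assms(4))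
  have bef: "\<forall>j<ks. noel \<delta> \<alpha> B r (Nf c j)" unfolding ks_def using not_less_Least by blast
  have st: "co_state \<delta> \<alpha> B r c ks = (Nf c ks, {1,2})" by (rule co_state_traj[OF assms(1-3) bef])
  obtain a where a: "co_step \<delta> \<alpha> B r c (Nf c ks, {1,2}) = ((Nf c ks)(a := Nf c ks a + 1), {best_arm r (Nf c ks)})"
    "a \<in> {1,2}"
    using co_step_el[OF assms(1-3) nks] by blast
  have st2: "co_state \<delta> \<alpha> B r c (Suc ks) = ((Nf c ks)(a := Nf c ks a + 1), {best_arm r (Nf c ks)})"
    using st a by (simp add: co_state_def)
  have stops: "co_stops \<delta> \<alpha> B r c (Suc ks)" using st2 by (simp add: co_stops_def)
  have least: "(LEAST k. co_stops \<delta> \<alpha> B r c k) = Suc ks"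
  proof (rule Least_equality)
    show "co_stops \<delta> \<alpha> B r c (Suc ks)" by (rule stops)
  next
    fix y assume "co_stops \<delta> \<alpha> B r c y"
    then show "Suc ks \<le> y"
      using co_stops_traj[OF assms(1-3), of y r c] bef by (metis less_Suc_eq_le not_le order.strict_trans1 order_less_imp_le) 
  qed
  have "co_J_tau \<delta> \<alpha> B r c = ereal (total_cost c ((Nf c ks)(a := Nf c ks a + 1)))"
    using stops least st2 by (auto simp: co_J_tau_def)
  moreover have "total_cost c ((Nf c ks)(a := Nf c ks a + 1)) \<le> total_cost c (Nf c ks) + 1"
    using total_cost_upd[OF a(2)] cle[OF a(2)] by simp
  ultimately show ?thesis using bef by blast
qed




lemma inv_lemma:
  fixes x y :: "nat \<Rightarrow> nat" and a b :: real
  assumes b: "b \<ge> 0"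
    and st: "\<forall>k\<ge>K0. (x (Suc k) = x k + 1 \<and> y (Suc k) = y k \<and> a * x k \<le> b * y k) \<or> (x (Suc k) = x k \<and> y (Suc k) = y k + 1)"
  shows "\<forall>k\<ge>K0. a * x k \<le> b * y k + (\<bar>a * x K0\<bar> + \<bar>a\<bar>)"
proof (intro allI impI)
  fix k assume "K0 \<le> k"
  then show "a * x k \<le> b * y k + (\<bar>a * x K0\<bar> + \<bar>a\<bar>)"
  proof (induction k rule: dec_induct)
    case base
    have "0 \<le> b * y K0" using b by simp
    then show ?case by linarith
  next
    case (step k)
    from st step(1) consider
      "x (Suc k) = x k + 1" "y (Suc k) = y k" "a * x k \<le> b * y k"
      | "x (Suc k) = x k" "y (Suc k) = y k + 1" by blast
    then show ?case
    proof cases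
      case 1
      have "a * x (Suc k) = a * x k + a" using 1 by (simp add: algebra_simps)
      then show ?thesis using 1 b by (simp add: algebra_simps)
    next
      case 2
      have "b * y k \<le> b * y (Suc k)" using 2 b by (simp add: mult_left_mono)
      then show ?thesis using 2 step by simp
    qed
  qed
qed

lemma nat_filterlim_real:
  assumes "filterlim (y :: nat \<Rightarrow> nat) at_top sequentially"
  shows "filterlim (\<lambda>k. real (y k)) at_top sequentially"
  using filterlim_compose[OF filterlim_real_sequentially assms] by simp

lemma ratio_lim:
  fixes x y :: "nat \<Rightarrow> nat" and s t :: real
  assumes s: "s > 0" and t: "t > 0"
    and x: "filterlim x at_top sequentially" and y: "filterlim y at_top sequentially"
    and inv: "\<forall>\<epsilon>>0. \<exists>A. eventually (\<lambda>k. (s-\<epsilon>)*x k \<le> (t+\<epsilon>)*y k + A \<and> (t-\<epsilon>)*y k \<le> (s+\<epsilon>)*x k + A) sequentially"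
  shows "(\<lambda>k. real (x k) / real (y k)) \<longlonglongrightarrow> t/s"
proof (rule order_tendstoI)
  have xr: "filterlim (\<lambda>k. real (x k)) at_top sequentially" by (rule nat_filterlim_real[OF x])
  have yr: "filterlim (\<lambda>k. real (y k)) at_top sequentially" by (rule nat_filterlim_real[OF y])
  {
    fix a assume a: "a > t/s"
    then have as: "a * s > t" using s by (simp add: field_simps)
    have a0: "a > 0" using a s t by (metis divide_pos_pos order.strict_trans)
    define g where "g = (a * s - t)/2"
    define \<epsilon> where "\<epsilon> = (a * s - t)/(2*(1+a))"
    have g0: "g > 0" using as by (simp add: g_def)
    have e0: "\<epsilon> > 0" using as a0 by (simp add: \<epsilon>_def)
    have key: "t + \<epsilon> + g = a * (s - \<epsilon>)" using a0 by (simp add: \<epsilon>_def g_def field_simps)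
    have se: "s - \<epsilon> > 0"
    proof -
      have "a * (s - \<epsilon>) > 0" using key t e0 g0 by linarith
      then show ?thesis using a0 by (simp add: zero_less_mult_iff)
    qed
    obtain A where A: "eventually (\<lambda>k. (s-\<epsilon>)*x k \<le> (t+\<epsilon>)*y k + A \<and> (t-\<epsilon>)*y k \<le> (s+\<epsilon>)*x k + A) sequentially"
      using inv e0 by blast
    have ev: "eventually (\<lambda>k. real (y k) \<ge> max (A/g + 1) 1) sequentially"
      using yr unfolding filterlim_at_top by blast
    show "eventually (\<lambda>k. real (x k) / real (y k) < a) sequentially"
      using A ev
    proof eventually_elim
      case (elim k)
      have "g * (A/g + 1) \<le> g * y k" using elim g0 by (intro mult_left_mono) auto
      moreover have "g * (A/g + 1) = A + g" using g0 by (simp add: field_simps)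
      ultimately have yA: "g * y k > A" using g0 by linarith
      have eq: "t + \<epsilon> = a*(s-\<epsilon>) - g" using key by linarith
      have "(s-\<epsilon>)*x k \<le> (a*(s-\<epsilon>) - g) * y k + A" using elim by (simp only: eq)
      then have "(s-\<epsilon>)*x k < (a*(s-\<epsilon>)) * y k" using yA by (simp add: algebra_simps)
      then have "x k < a * y k" using se by (simp add: mult.assoc[symmetric] mult.commute[of _ a])
      moreover have "real (y k) > 0" using elim by linarith
      ultimately show ?case by (simp add: divide_simps)
    qed
  }
  {
    fix a assume a: "a < t/s"
    show "eventually (\<lambda>k. a < real (x k) / real (y k)) sequentially"
    proof (cases "a \<le> 0")
      case True
      have "eventually (\<lambda>k. real (x k) \<ge> 1 \<and> real (y k) \<ge> 1) sequentially"
        using xr yr unfolding filterlim_at_top by (intro eventually_conj) blast+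
      then show ?thesis
      proof eventually_elim
        case (elim k) then have "real (x k) / real (y k) > 0" by simp
        then show ?case using True by linarith
      qed
    next
      case False
      then have a0: "a > 0" by simp
      have as: "t - a * s > 0" using a s by (simp add: field_simps)
      define g where "g = (t - a * s)/2"
      define \<epsilon> where "\<epsilon> = (t - a * s)/(2*(1+a))"
      have g0: "g > 0" using as by (simp add: g_def)
      have e0: "\<epsilon> > 0" using as a0 by (simp add: \<epsilon>_def)
      have key: "t - \<epsilon> = a * (s + \<epsilon>) + g" using a0 by (simp add: \<epsilon>_def g_def field_simps)
      have se: "s + \<epsilon> > 0" using s e0 by simp
      obtain A where A: "eventually (\<lambda>k. (s-\<epsilon>)*x k \<le> (t+\<epsilon>)*y k + A \<and> (t-\<epsilon>)*y k \<le> (s+\<epsilon>)*x k + A) sequentially"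
        using inv e0 by blast
      have ev: "eventually (\<lambda>k. real (y k) \<ge> max (A/g + 1) 1) sequentially"
        using yr unfolding filterlim_at_top by blast
      show ?thesis
        using A ev
      proof eventually_elim
        case (elim k)
        have "g * (A/g + 1) \<le> g * y k" using elim g0 by (intro mult_left_mono) auto
        moreover have "g * (A/g + 1) = A + g" using g0 by (simp add: field_simps)
      ultimately have yA: "g * y k > A" using g0 by linarith
        have "(a * (s + \<epsilon>) + g) * y k \<le> (s+\<epsilon>)*x k + A" using elim by (simp only: key)
        then have "(s+\<epsilon>) * (a * y k) < (s+\<epsilon>)*x k" using yA by (simp add: algebra_simps)
        then have "a * y k < x k" using se by simp
        moreover have "real (y k) > 0" using elim by linarith
        ultimately show ?case by (simp add: divide_simps)
      qed
    qed
  }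
qed




lemma unb_to_lim:
  assumes "incseq (f::nat\<Rightarrow>nat)" "\<forall>M. \<exists>k. M \<le> f k"
  shows "filterlim f at_top sequentially"
  unfolding filterlim_at_top
proof
  fix Z
  obtain k0 where "Z \<le> f k0" using assms(2) by blast
  then show "eventually (\<lambda>k. Z \<le> f k) sequentially"
    unfolding eventually_sequentially using assms(1) by (meson incseqD order.trans)
qed

lemma step_lin:
  assumes "\<forall>k\<ge>k0. f (Suc k) = f k + (1::nat)"
  shows "f (k0 + j) = f k0 + j"
  using assms by (induction j) auto

lemma emp_bnd:
  assumes "n > 0" "\<And>k. x a k \<in> {l..u}"
  shows "l \<le> emp x a n \<and> emp x a n \<le> u"
proof -
  have "(\<Sum>k<n. x a k) \<le> of_nat (card {..<n}) * u"
    by (rule sum_bounded_above) (use assms in auto)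
  moreover have "of_nat (card {..<n}) * l \<le> (\<Sum>k<n. x a k)"
    by (rule sum_bounded_below) (use assms in auto)
  ultimately show ?thesis using assms(1) by (simp add: emp_def field_simps)
qed

locale traj =
  fixes c r :: "nat \<Rightarrow> nat \<Rightarrow> real" and cm \<mu> :: "nat \<Rightarrow> real" and l :: real
  assumes l0: "l > 0" and cb: "\<And>a k. a \<in> {1,2} \<Longrightarrow> c a k \<in> {l..1}"
    and clim: "\<And>a. a \<in> {1,2} \<Longrightarrow> (\<lambda>n. emp c a n) \<longlonglongrightarrow> cm a"
    and rlim: "\<And>a. a \<in> {1,2} \<Longrightarrow> (\<lambda>n. emp r a n) \<longlonglongrightarrow> \<mu> a"
begin

lemma sq_bnd:
  assumes "a \<in> {1,2}" "n > 0"
  shows "sqrt l \<le> sqrt (emp c a n) \<and> sqrt (emp c a n) \<le> 1"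
  using emp_bnd[OF assms(2), of c a l 1] cb[OF assms(1)] by auto

lemma cm_bnd:
  assumes "a \<in> {1,2}"
  shows "l \<le> cm a \<and> cm a \<le> 1"
proof -
  have ev: "eventually (\<lambda>n. l \<le> emp c a n \<and> emp c a n \<le> 1) sequentially"
    unfolding eventually_sequentially
    using emp_bnd[of _ c a l 1] cb[OF assms] by (intro exI[of _ 1]) auto
  have "l \<le> cm a"
    by (rule tendsto_lowerbound[OF clim[OF assms]]) (use ev in \<open>auto elim: eventually_mono\<close>)
  moreover have "cm a \<le> 1"
    by (rule tendsto_upperbound[OF clim[OF assms]]) (use ev in \<open>auto elim: eventually_mono\<close>)
  ultimately show ?thesis by simp
qed

lemma incseq_Nf1: "incseq (\<lambda>k. Nf c k 1)"
  by (rule incseq_SucI) (use Nf_Suc1[of c] in simp)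

lemma incseq_Nf2: "incseq (\<lambda>k. Nf c k 2)"
  by (rule incseq_SucI) (use Nf_Suc2[of c] in simp)

lemma n1_inf: "filterlim (\<lambda>k. Nf c k 1) at_top sequentially"
proof (rule unb_to_lim[OF incseq_Nf1], rule ccontr)
  assume "\<not> (\<forall>M. \<exists>k. M \<le> Nf c k 1)"
  then obtain M where M: "\<And>k. Nf c k 1 < M" by (meson not_le)
  define k0 where "k0 = nat \<lceil>M / sqrt l\<rceil> + M"
  have sl: "sqrt l > 0" using l0 by simp
  have st: "\<forall>k\<ge>k0. Nf c (Suc k) 1 = Nf c k 1 + 1"
  proof (intro allI impI)
    fix k assume k: "k0 \<le> k"
    have P: "Nf c k 1 + Nf c k 2 = k + 2" "Nf c k 1 \<ge> 1" "Nf c k 2 \<ge> 1" using Nf_props[of c k] by auto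
    have "real (Nf c k 2) \<ge> real (nat \<lceil>M / sqrt l\<rceil>) + 2" using P M[of k] k unfolding k0_def by linarith
    moreover have "real (nat \<lceil>M / sqrt l\<rceil>) \<ge> M / sqrt l" by linarith
    ultimately have "real (Nf c k 2) \<ge> M / sqrt l" by linarith
    then have "sqrt l * real (Nf c k 2) \<ge> sqrt l * (M / sqrt l)" using sl by (intro mult_left_mono) auto
    then have h2: "sqrt l * real (Nf c k 2) \<ge> M" using sl by simp
    have "sqrt (emp c 2 (Nf c k 2)) * real (Nf c k 2) \<ge> sqrt l * real (Nf c k 2)"
      using sq_bnd[of 2 "Nf c k 2"] P by (intro mult_right_mono) auto
    moreover have "sqrt (emp c 1 (Nf c k 1)) * real (Nf c k 1) \<le> 1 * real (Nf c k 1)"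
      using sq_bnd[of 1 "Nf c k 1"] P by (intro mult_right_mono) auto
    moreover have "real (Nf c k 1) < M" using M[of k] by simp
    ultimately have "\<not> sqrt (emp c 2 (Nf c k 2)) * real (Nf c k 2) < sqrt (emp c 1 (Nf c k 1)) * real (Nf c k 1)"
      using h2 by linarith
    then show "Nf c (Suc k) 1 = Nf c k 1 + 1" using Nf_Suc1[of c k] by simp
  qed
  have "Nf c (k0 + M) 1 = Nf c k0 1 + M" by (rule step_lin[OF st])
  then show False using M[of "k0 + M"] by simp
qed

lemma n2_inf: "filterlim (\<lambda>k. Nf c k 2) at_top sequentially"
proof (rule unb_to_lim[OF incseq_Nf2], rule ccontr)
  assume "\<not> (\<forall>M. \<exists>k. M \<le> Nf c k 2)"
  then obtain M where M: "\<And>k. Nf c k 2 < M" by (meson not_le)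
  define k0 where "k0 = nat \<lceil>M / sqrt l\<rceil> + M"
  have sl: "sqrt l > 0" using l0 by simp
  have st: "\<forall>k\<ge>k0. Nf c (Suc k) 2 = Nf c k 2 + 1"
  proof (intro allI impI)
    fix k assume k: "k0 \<le> k"
    have P: "Nf c k 1 + Nf c k 2 = k + 2" "Nf c k 1 \<ge> 1" "Nf c k 2 \<ge> 1" using Nf_props[of c k] by auto
    have "real (Nf c k 1) \<ge> real (nat \<lceil>M / sqrt l\<rceil>) + 2" using P M[of k] k unfolding k0_def by linarith
    moreover have "real (nat \<lceil>M / sqrt l\<rceil>) \<ge> M / sqrt l" by linarith
    ultimately have "real (Nf c k 1) \<ge> M / sqrt l + 1" by linarith
    then have "sqrt l * real (Nf c k 1) \<ge> sqrt l * (M / sqrt l + 1)" using sl by (intro mult_left_mono) auto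
    moreover have "sqrt l * (M / sqrt l + 1) = M + sqrt l" using sl by (simp add: field_simps)
    ultimately have h2: "sqrt l * real (Nf c k 1) > M" using sl by linarith
    have "sqrt (emp c 1 (Nf c k 1)) * real (Nf c k 1) \<ge> sqrt l * real (Nf c k 1)"
      using sq_bnd[of 1 "Nf c k 1"] P by (intro mult_right_mono) auto
    moreover have "sqrt (emp c 2 (Nf c k 2)) * real (Nf c k 2) \<le> 1 * real (Nf c k 2)"
      using sq_bnd[of 2 "Nf c k 2"] P by (intro mult_right_mono) auto
    moreover have "real (Nf c k 2) < M" using M[of k] by simp
    ultimately have "sqrt (emp c 2 (Nf c k 2)) * real (Nf c k 2) < sqrt (emp c 1 (Nf c k 1)) * real (Nf c k 1)"
      using h2 by linarith
    then show "Nf c (Suc k) 2 = Nf c k 2 + 1" using Nf_Suc2[of c k] by simp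
  qed
  have "Nf c (k0 + M) 2 = Nf c k0 2 + M" by (rule step_lin[OF st])
  then show False using M[of "k0 + M"] by simp
qed

end



context traj
begin

abbreviation "s1 \<equiv> sqrt (cm 1)"
abbreviation "s2 \<equiv> sqrt (cm 2)"

lemma s_pos: "s1 > 0" "s2 > 0"
  using cm_bnd[of 1] cm_bnd[of 2] l0 by auto

lemma hc_lim: "a \<in> {1,2} \<Longrightarrow> (\<lambda>k. emp c a (Nf c k a)) \<longlonglongrightarrow> cm a"
  using filterlim_compose[OF clim n1_inf] filterlim_compose[OF clim n2_inf] by auto

lemma m_lim: "a \<in> {1,2} \<Longrightarrow> (\<lambda>k. emp r a (Nf c k a)) \<longlonglongrightarrow> \<mu> a"
  using filterlim_compose[OF rlim n1_inf] filterlim_compose[OF rlim n2_inf] by auto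

lemma sq_ev:
  assumes "a \<in> {1,2}" "\<epsilon> > 0"
  shows "eventually (\<lambda>k. sqrt (cm a) - \<epsilon> < sqrt (emp c a (Nf c k a)) \<and> sqrt (emp c a (Nf c k a)) < sqrt (cm a) + \<epsilon>) sequentially"
proof -
  have t: "(\<lambda>k. sqrt (emp c a (Nf c k a))) \<longlonglongrightarrow> sqrt (cm a)"
    by (rule tendsto_real_sqrt[OF hc_lim[OF assms(1)]])
  show ?thesis
    using order_tendstoD(1)[OF t, of "sqrt (cm a) - \<epsilon>"] order_tendstoD(2)[OF t, of "sqrt (cm a) + \<epsilon>"] assms(2)
    by (auto intro: eventually_conj)
qed

lemma ratio_conv: "(\<lambda>k. real (Nf c k 1) / real (Nf c k 2)) \<longlonglongrightarrow> s2 / s1"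
proof (rule ratio_lim[OF s_pos n1_inf n2_inf], intro allI impI)
  fix \<epsilon> :: real assume e: "\<epsilon> > 0"
  obtain K0 where K0: "\<And>k. k \<ge> K0 \<Longrightarrow>
      (s1 - \<epsilon> < sqrt (emp c 1 (Nf c k 1)) \<and> sqrt (emp c 1 (Nf c k 1)) < s1 + \<epsilon>) \<and>
      (s2 - \<epsilon> < sqrt (emp c 2 (Nf c k 2)) \<and> sqrt (emp c 2 (Nf c k 2)) < s2 + \<epsilon>)"
    using eventually_conj[OF sq_ev[of 1 \<epsilon>] sq_ev[of 2 \<epsilon>]] e unfolding eventually_sequentially by auto
  have b1: "s1 + \<epsilon> \<ge> 0" "s2 + \<epsilon> \<ge> 0" using s_pos e by auto
  have st1: "\<forall>k\<ge>K0. (Nf c (Suc k) 1 = Nf c k 1 + 1 \<and> Nf c (Suc k) 2 = Nf c k 2 \<and> (s1 - \<epsilon>) * Nf c k 1 \<le> (s2 + \<epsilon>) * Nf c k 2)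
      \<or> (Nf c (Suc k) 1 = Nf c k 1 \<and> Nf c (Suc k) 2 = Nf c k 2 + 1)"
  proof (intro allI impI)
    fix k assume k: "K0 \<le> k"
    show "(Nf c (Suc k) 1 = Nf c k 1 + 1 \<and> Nf c (Suc k) 2 = Nf c k 2 \<and> (s1 - \<epsilon>) * Nf c k 1 \<le> (s2 + \<epsilon>) * Nf c k 2)
      \<or> (Nf c (Suc k) 1 = Nf c k 1 \<and> Nf c (Suc k) 2 = Nf c k 2 + 1)"
    proof (cases "sqrt (emp c 2 (Nf c k 2)) * real (Nf c k 2) < sqrt (emp c 1 (Nf c k 1)) * real (Nf c k 1)")
      case True
      then show ?thesis using Nf_Suc1[of c k] Nf_Suc2[of c k] by simp
    next
      case False
      have "(s1 - \<epsilon>) * Nf c k 1 \<le> sqrt (emp c 1 (Nf c k 1)) * Nf c k 1"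
        using K0[OF k] by (intro mult_right_mono) auto
      moreover have "sqrt (emp c 2 (Nf c k 2)) * Nf c k 2 \<le> (s2 + \<epsilon>) * Nf c k 2"
        using K0[OF k] by (intro mult_right_mono) auto
      ultimately have "(s1 - \<epsilon>) * Nf c k 1 \<le> (s2 + \<epsilon>) * Nf c k 2" using False by linarith
      then show ?thesis using False Nf_Suc1[of c k] Nf_Suc2[of c k] by simp
    qed
  qed
  have st2: "\<forall>k\<ge>K0. (Nf c (Suc k) 2 = Nf c k 2 + 1 \<and> Nf c (Suc k) 1 = Nf c k 1 \<and> (s2 - \<epsilon>) * Nf c k 2 \<le> (s1 + \<epsilon>) * Nf c k 1)
      \<or> (Nf c (Suc k) 2 = Nf c k 2 \<and> Nf c (Suc k) 1 = Nf c k 1 + 1)"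
  proof (intro allI impI)
    fix k assume k: "K0 \<le> k"
    show "(Nf c (Suc k) 2 = Nf c k 2 + 1 \<and> Nf c (Suc k) 1 = Nf c k 1 \<and> (s2 - \<epsilon>) * Nf c k 2 \<le> (s1 + \<epsilon>) * Nf c k 1)
      \<or> (Nf c (Suc k) 2 = Nf c k 2 \<and> Nf c (Suc k) 1 = Nf c k 1 + 1)"
    proof (cases "sqrt (emp c 2 (Nf c k 2)) * real (Nf c k 2) < sqrt (emp c 1 (Nf c k 1)) * real (Nf c k 1)")
      case True
      have "(s2 - \<epsilon>) * Nf c k 2 \<le> sqrt (emp c 2 (Nf c k 2)) * Nf c k 2"
        using K0[OF k] by (intro mult_right_mono) auto
      moreover have "sqrt (emp c 1 (Nf c k 1)) * Nf c k 1 \<le> (s1 + \<epsilon>) * Nf c k 1"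
        using K0[OF k] by (intro mult_right_mono) auto
      ultimately have "(s2 - \<epsilon>) * Nf c k 2 \<le> (s1 + \<epsilon>) * Nf c k 1" using True by linarith
      then show ?thesis using True Nf_Suc1[of c k] Nf_Suc2[of c k] by simp
    next
      case False
      then show ?thesis using Nf_Suc1[of c k] Nf_Suc2[of c k] by simp
    qed
  qed
  note i1 = inv_lemma[OF b1(2) st1]
  note i2 = inv_lemma[OF b1(1) st2]
  define A1 where "A1 = \<bar>(s1 - \<epsilon>) * real (Nf c K0 1)\<bar> + \<bar>s1 - \<epsilon>\<bar>"
  define A2 where "A2 = \<bar>(s2 - \<epsilon>) * real (Nf c K0 2)\<bar> + \<bar>s2 - \<epsilon>\<bar>"
  show "\<exists>A. eventually (\<lambda>k. (s1-\<epsilon>)*Nf c k 1 \<le> (s2+\<epsilon>)*Nf c k 2 + A \<and> (s2-\<epsilon>)*Nf c k 2 \<le> (s1+\<epsilon>)*Nf c k 1 + A) sequentially"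
  proof (intro exI[of _ "max A1 A2"], unfold eventually_sequentially, intro exI[of _ K0] allI impI)
    fix k assume k: "K0 \<le> k"
    have "(s1-\<epsilon>)*Nf c k 1 \<le> (s2+\<epsilon>)*Nf c k 2 + A1" using i1 k unfolding A1_def by blast
    moreover have "(s2-\<epsilon>)*Nf c k 2 \<le> (s1+\<epsilon>)*Nf c k 1 + A2" using i2 k unfolding A2_def by blast
    ultimately show "(s1-\<epsilon>)*Nf c k 1 \<le> (s2+\<epsilon>)*Nf c k 2 + max A1 A2 \<and> (s2-\<epsilon>)*Nf c k 2 \<le> (s1+\<epsilon>)*Nf c k 1 + max A1 A2"
      by linarith
  qed
qed

end



lemma emp_mult: "n > 0 \<Longrightarrow> real n * emp x a n = (\<Sum>k<n. x a k)"
  by (simp add: emp_def)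

lemma z_alg:
  fixes p q x y :: real
  assumes "p > 0" "q > 0"
  shows "p * dG x ((p*x+q*y)/(p+q)) + q * dG y ((p*x+q*y)/(p+q)) = p*q/(p+q) * ((x-y)^2/2)"
proof -
  define m where "m = (p*x+q*y)/(p+q)"
  have pq: "p + q > 0" using assms by simp
  have e1: "x - m = q*(x-y)/(p+q)" using pq unfolding m_def by (simp add: field_simps)
  have e2: "y - m = -(p*(x-y)/(p+q))" using pq unfolding m_def by (simp add: field_simps)
  have g: "\<And>D E::real. p*(q^2*E/D/2) + q*(p^2*E/D/2) = (p*q^2+q*p^2)*E/D/2"
    by (simp add: divide_simps) (simp add: algebra_simps)
  have "p * dG x m + q * dG y m = p*(q^2*(x-y)^2/(p+q)^2/2) + q*(p^2*(x-y)^2/(p+q)^2/2)"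
    unfolding dG_def e1 e2 by (simp add: power_divide power_mult_distrib)
  also have "\<dots> = (p*q^2 + q*p^2) * (x-y)^2 / (p+q)^2 / 2" by (rule g)
  finally have "p * dG x m + q * dG y m = (p*q^2 + q*p^2) * (x-y)^2 / (p+q)^2 / 2" .
  also have "\<dots> = p*q*(p+q) * (x-y)^2 / ((p+q)*(p+q)) / 2"
    by (simp add: power2_eq_square algebra_simps)
  also have "\<dots> = p*q/(p+q) * ((x-y)^2/2)"
  proof -
    have "\<And>E S. S > 0 \<Longrightarrow> p*q*S*E/(S*S)/2 = p*q/S*(E/2)" by (simp add: field_simps)
    then show ?thesis using pq by blast
  qed
  finally show ?thesis unfolding m_def .
qed

lemma Z_eq:
  assumes "N 1 > 0" "N 2 > 0"
  shows "Zstat r N 1 2 = real (N 1) * real (N 2) / (real (N 1) + real (N 2)) * ((emp r 1 (N 1) - emp r 2 (N 2))^2/2)"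
  using z_alg[of "real (N 1)" "real (N 2)" "emp r 1 (N 1)" "emp r 2 (N 2)"] assms
  by (simp add: Zstat_def Let_def)

lemma J_eq:
  assumes "N 1 > 0" "N 2 > 0"
  shows "total_cost c N = real (N 1) * emp c 1 (N 1) + real (N 2) * emp c 2 (N 2)"
  using assms by (simp add: total_cost_def emp_mult)

context traj
begin

lemma JZ_expr:
  "total_cost c (Nf c k) / Zstat r (Nf c k) 1 2 =
     (emp c 1 (Nf c k 1) * (real (Nf c k 1) / real (Nf c k 2)) + emp c 2 (Nf c k 2)) * (real (Nf c k 1) / real (Nf c k 2) + 1)
     / ((real (Nf c k 1) / real (Nf c k 2)) * ((emp r 1 (Nf c k 1) - emp r 2 (Nf c k 2))^2/2))"
proof -
  have p: "Nf c k 1 > 0" "Nf c k 2 > 0" using Nf_props[of c k] by auto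
  show ?thesis unfolding J_eq[OF p] Z_eq[OF p]
    using p by (cases "emp r 1 (Nf c k 1) = emp r 2 (Nf c k 2)") (simp_all add: field_simps)
qed

lemma Zt_expr:
  "Zstat r (Nf c k) 1 2 / real (k+2) =
     (real (Nf c k 1) / real (Nf c k 2)) / (real (Nf c k 1) / real (Nf c k 2) + 1)^2 * ((emp r 1 (Nf c k 1) - emp r 2 (Nf c k 2))^2/2)"
proof -
  have p: "Nf c k 1 > 0" "Nf c k 2 > 0" using Nf_props[of c k] by auto
  have s: "real (k+2) = real (Nf c k 1) + real (Nf c k 2)" using Nf_props[of c k] by simp
  show ?thesis unfolding Z_eq[OF p] s
    using p by (simp add: field_simps power2_eq_square)
qed

lemma JZ_lim:
  assumes "\<mu> 1 \<noteq> \<mu> 2"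
  shows "(\<lambda>k. total_cost c (Nf c k) / Zstat r (Nf c k) 1 2) \<longlonglongrightarrow> 2 * (s1 + s2)^2 / (\<mu> 1 - \<mu> 2)^2"
proof -
  have sp: "s1 > 0" "s2 > 0" by (rule s_pos)+
  define Q where "Q = (\<lambda>k. real (Nf c k 1) / real (Nf c k 2))"
  have QL: "Q \<longlonglongrightarrow> s2/s1" unfolding Q_def by (rule ratio_conv)
  have lim: "(\<lambda>k. (emp c 1 (Nf c k 1) * Q k + emp c 2 (Nf c k 2)) * (Q k + 1)
     / (Q k * ((emp r 1 (Nf c k 1) - emp r 2 (Nf c k 2))^2/2)))
     \<longlonglongrightarrow> (cm 1 * (s2/s1) + cm 2) * (s2/s1 + 1) / ((s2/s1) * ((\<mu> 1 - \<mu> 2)^2/2))"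
    using sp assms
    by (intro tendsto_intros hc_lim m_lim QL) auto
  have c1: "cm 1 = s1^2" "cm 2 = s2^2" using cm_bnd[of 1] cm_bnd[of 2] l0 by auto
  have d: "(\<mu> 1 - \<mu> 2)^2 > 0" using assms by simp
  have gen: "\<And>C1 C2 a b::real. a > 0 \<Longrightarrow> C1 = a^2 \<Longrightarrow> C2 = b^2 \<Longrightarrow> (C1*(b/a)+C2)*(b/a+1) = b*(a+b)^2/a"
    by (simp add: field_simps power2_eq_square)
  have "(cm 1 * (s2/s1) + cm 2) * (s2/s1 + 1) = s2 * (s1 + s2)^2 / s1"
    by (rule gen[OF sp(1) c1])
  then have "(cm 1 * (s2/s1) + cm 2) * (s2/s1 + 1) / ((s2/s1) * ((\<mu> 1 - \<mu> 2)^2/2))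
      = (s2 * (s1 + s2)^2 / s1) / ((s2/s1) * ((\<mu> 1 - \<mu> 2)^2/2))" by simp
  also have "\<dots> = 2 * (s1 + s2)^2 / (\<mu> 1 - \<mu> 2)^2"
    using sp d by (simp add: field_simps)
  finally have "(cm 1 * (s2/s1) + cm 2) * (s2/s1 + 1) / ((s2/s1) * ((\<mu> 1 - \<mu> 2)^2/2)) = 2 * (s1 + s2)^2 / (\<mu> 1 - \<mu> 2)^2" .
  then show ?thesis using lim unfolding JZ_expr Q_def by simp
qed

lemma Zt_lim:
  assumes "\<mu> 1 \<noteq> \<mu> 2"
  shows "(\<lambda>k. Zstat r (Nf c k) 1 2 / real (k+2)) \<longlonglongrightarrow> (s2/s1) / (s2/s1 + 1)^2 * ((\<mu> 1 - \<mu> 2)^2/2)"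
proof -
  define Q where "Q = (\<lambda>k. real (Nf c k 1) / real (Nf c k 2))"
  have QL: "Q \<longlonglongrightarrow> s2/s1" unfolding Q_def by (rule ratio_conv)
  have "(\<lambda>k. Q k / (Q k + 1)^2 * ((emp r 1 (Nf c k 1) - emp r 2 (Nf c k 2))^2/2)) \<longlonglongrightarrow> (s2/s1) / (s2/s1 + 1)^2 * ((\<mu> 1 - \<mu> 2)^2/2)"
  proof -
    have ne: "s2/s1 + 1 \<noteq> 0" using s_pos by (smt (verit) divide_pos_pos)
    show ?thesis using ne by (intro tendsto_intros m_lim QL) auto
  qed
  then show ?thesis unfolding Zt_expr Q_def .
qed

lemma z0_pos:
  assumes "\<mu> 1 \<noteq> \<mu> 2"
  shows "(s2/s1) / (s2/s1 + 1)^2 * ((\<mu> 1 - \<mu> 2)^2/2) > 0"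
proof -
  have a: "s2/s1 > 0" using s_pos by simp
  have b: "(s2/s1 + 1)^2 > 0" using a by simp
  have d: "(\<mu> 1 - \<mu> 2)^2/2 > 0" using assms by simp
  show ?thesis by (rule mult_pos_pos[OF divide_pos_pos[OF a b] d])
qed

end



lemma lnU:
  fixes \<alpha> \<eta> :: real
  assumes "\<alpha> > 0" "\<eta> > 0"
  shows "\<exists>C. \<forall>x\<ge>1. \<alpha> * ln x \<le> \<eta> * x + C"
proof -
  have "eventually (\<lambda>x. ln x / x < \<eta> / \<alpha>) at_top"
    using order_tendstoD(2)[OF ln_x_over_x_tendsto_0, of "\<eta>/\<alpha>"] assms by simp
  then obtain X0 where X0: "\<And>x. x \<ge> X0 \<Longrightarrow> ln x / x < \<eta> / \<alpha>"
    unfolding eventually_at_top_linorder by blast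
  define X1 where "X1 = max X0 1"
  show ?thesis
  proof (intro exI[of _ "\<alpha> * ln X1"] allI impI)
    fix x :: real assume x: "x \<ge> 1"
    have l1: "ln X1 \<ge> 0" unfolding X1_def by simp
    show "\<alpha> * ln x \<le> \<eta> * x + \<alpha> * ln X1"
    proof (cases "x \<ge> X0")
      case True
      have "ln x / x < \<eta> / \<alpha>" by (rule X0[OF True])
      then have "ln x < \<eta> / \<alpha> * x" using x by (simp add: divide_less_eq)
      then have "\<alpha> * ln x < \<alpha> * (\<eta> / \<alpha> * x)" using assms(1) by (simp only: mult_less_cancel_left_pos)
      then have "\<alpha> * ln x < \<eta> * x" using assms(1) by simp
      moreover have "0 \<le> \<alpha> * ln X1" using assms(1) l1 by simp
      ultimately show ?thesis by linarith
    next
      case False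
      then have "x \<le> X1" unfolding X1_def by simp
      then have "ln x \<le> ln X1" using x by simp
      then have "\<alpha> * ln x \<le> \<alpha> * ln X1" using assms(1) by simp
      moreover have "0 \<le> \<eta> * x" using assms(2) x by simp
      ultimately show ?thesis by linarith
    qed
  qed
qed

lemma ln_split:
  fixes B x \<delta> \<alpha> :: real
  assumes "B > 0" "x > 0" "\<delta> > 0"
  shows "ln (B * x powr \<alpha> / \<delta>) = ln B + \<alpha> * ln x + ln (1/\<delta>)"
  using assms by (simp add: ln_mult ln_div ln_powr)

lemma L_lim: "filterlim (\<lambda>\<delta>::real. ln (1/\<delta>)) at_top (at_right 0)"
  using filterlim_compose[OF ln_at_top filterlim_inverse_at_top_right]
  by (simp add: inverse_eq_divide)

context traj
begin

lemma Z_nonneg: "Zstat r (Nf c k) 1 2 \<ge> 0"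
proof -
  have p: "Nf c k 1 > 0" "Nf c k 2 > 0" using Nf_props[of c k] by auto
  show ?thesis unfolding Z_eq[OF p] by simp
qed

lemma J_le: "total_cost c (Nf c k) \<le> real (k+2)"
proof -
  have p: "Nf c k 1 > 0" "Nf c k 2 > 0" using Nf_props[of c k] by auto
  have a: "real (Nf c k 1) * emp c 1 (Nf c k 1) \<le> real (Nf c k 1) * 1"
    using emp_bnd[of "Nf c k 1" c 1 l 1] cb[of 1] p by (intro mult_left_mono) auto
  have b: "real (Nf c k 2) * emp c 2 (Nf c k 2) \<le> real (Nf c k 2) * 1"
    using emp_bnd[of "Nf c k 2" c 2 l 1] cb[of 2] p by (intro mult_left_mono) auto
  have s: "real (k+2) = real (Nf c k 1) + real (Nf c k 2)" using Nf_props[of c k] by simp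
  show ?thesis unfolding J_eq[OF p] s using a b by simp
qed

lemma noel_iff:
  assumes "B > 0" "\<delta> > 0"
  shows "noel \<delta> \<alpha> B r (Nf c k) \<longleftrightarrow> Zstat r (Nf c k) 1 2 \<le> ln B + \<alpha> * ln (real (k+2)) + ln (1/\<delta>)"
proof -
  have s: "real (Nf c k 1 + Nf c k 2) = real (k+2)" using Nf_props[of c k] by simp
  show ?thesis unfolding noel_def s using ln_split[OF assms(1) _ assms(2), of "real (k+2)" \<alpha>] by simp
qed

end



context traj
begin

lemma det_main:
  assumes al: "\<alpha> > 1" and B0: "B > 0" and mu: "\<mu> 1 \<noteq> \<mu> 2"
  shows "Limsup (at_right 0) (\<lambda>\<delta>. co_J_tau \<delta> \<alpha> B r c / ereal (ln (1/\<delta>)))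
           \<le> ereal (2 * \<alpha> * (sqrt (cm 1) + sqrt (cm 2))^2 / (\<mu> 1 - \<mu> 2)^2)"
proof -
  define \<rho> where "\<rho> = 2 * (s1 + s2)^2 / (\<mu> 1 - \<mu> 2)^2"
  have sp: "s1 > 0" "s2 > 0" by (rule s_pos)+
  have d0: "(\<mu> 1 - \<mu> 2)^2 > 0" using mu by simp
  have "s1 + s2 > 0" using sp by linarith
  then have "(s1 + s2)^2 > 0" by (rule zero_less_power)
  then have rho0: "\<rho> > 0" unfolding \<rho>_def using d0 by simp
  define \<rho>1 where "\<rho>1 = (1+\<alpha>)/2 * \<rho>"
  have r1a: "\<rho> < \<rho>1" unfolding \<rho>1_def using rho0 al by (simp add: field_simps)
  have r1b: "\<rho>1 < \<alpha> * \<rho>" unfolding \<rho>1_def using rho0 al by (simp add: field_simps)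
  have r1p: "\<rho>1 > 0" using r1a rho0 by simp
  define z0 where "z0 = (s2/s1) / (s2/s1 + 1)^2 * ((\<mu> 1 - \<mu> 2)^2/2)"
  have z0p: "z0 > 0" unfolding z0_def by (rule z0_pos[OF mu])
  define Jk where "Jk = (\<lambda>k. total_cost c (Nf c k))"
  define Zk where "Zk = (\<lambda>k. Zstat r (Nf c k) 1 2)"
  have ev1: "eventually (\<lambda>k. Jk k / Zk k < \<rho>1) sequentially"
    using order_tendstoD(2)[OF JZ_lim[OF mu] r1a[unfolded \<rho>_def]] unfolding Jk_def Zk_def .
  have ev2: "eventually (\<lambda>k. z0/2 < Zk k / real (k+2)) sequentially"
    using order_tendstoD(1)[OF Zt_lim[OF mu], of "z0/2"] z0p unfolding Zk_def z0_def by simp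
  obtain K where K: "\<And>k. k \<ge> K \<Longrightarrow> Jk k / Zk k < \<rho>1 \<and> z0/2 < Zk k / real (k+2)"
    using eventually_conj[OF ev1 ev2] unfolding eventually_sequentially by blast
  have Zn: "\<And>k. Zk k \<ge> 0" unfolding Zk_def by (rule Z_nonneg)
  have Jl: "\<And>k. Jk k \<le> real (k+2)" unfolding Jk_def by (rule J_le)
  have I: "\<And>k. Jk k \<le> \<rho>1 * Zk k + (real K + 2)"
  proof -
    fix k
    show "Jk k \<le> \<rho>1 * Zk k + (real K + 2)"
    proof (cases "k \<ge> K")
      case True
      have kp: "real (k+2) > 0" by simp
      have "z0/2 * real (k+2) < Zk k" using K[OF True] kp by (simp add: less_divide_eq)
      moreover have "z0/2 * real (k+2) > 0" using z0p by simp
      ultimately have Zp: "Zk k > 0" by linarith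
      have "Jk k < \<rho>1 * Zk k" using K[OF True] Zp by (simp add: divide_less_eq)
      then show ?thesis by simp
    next
      case False
      have "Jk k \<le> real K + 2" using Jl[of k] False by simp
      moreover have "0 \<le> \<rho>1 * Zk k" using r1p Zn[of k] by simp
      ultimately show ?thesis by linarith
    qed
  qed
  have II: "\<And>k. z0/2 * real (k+2) - z0/2 * (real K + 2) \<le> Zk k"
  proof -
    fix k
    show "z0/2 * real (k+2) - z0/2 * (real K + 2) \<le> Zk k"
    proof (cases "k \<ge> K")
      case True
      have kp: "real (k+2) > 0" by simp
      have "z0/2 * real (k+2) < Zk k" using K[OF True] kp by (simp add: less_divide_eq)
      moreover have "z0/2 * (real K + 2) \<ge> 0" using z0p by simp
      ultimately show ?thesis by linarith
    next
      case False
      have "z0/2 * real (k+2) \<le> z0/2 * (real K + 2)" using False z0p by (intro mult_left_mono) auto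
      then show ?thesis using Zn[of k] by linarith
    qed
  qed
  have a0: "\<alpha> > 0" using al by simp
  obtain C2 where C2: "\<And>x. x \<ge> 1 \<Longrightarrow> \<alpha> * ln x \<le> z0/4 * x + C2"
    using lnU[OF a0, of "z0/4"] z0p by auto
  define a where "a = 4 / z0"
  have ap: "a > 0" unfolding a_def using z0p by simp
  define C3 where "C3 = z0/2 * (real K + 2) + ln B + C2"
  have III: "\<And>k L. Zk k \<le> ln B + \<alpha> * ln (real (k+2)) + L \<Longrightarrow> real (k+2) \<le> a * (C3 + L)"
  proof -
    fix k L assume h: "Zk k \<le> ln B + \<alpha> * ln (real (k+2)) + L"
    have "\<alpha> * ln (real (k+2)) \<le> z0/4 * real (k+2) + C2" by (rule C2) simp
    then have "z0/4 * real (k+2) \<le> C3 + L" using h II[of k] unfolding C3_def by linarith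
    then have i1: "(4/z0) * (z0/4 * real (k+2)) \<le> (4/z0) * (C3 + L)" using z0p by (intro mult_left_mono) auto
    have i2: "(4/z0) * (z0/4 * real (k+2)) = real (k+2)" using z0p by simp
    show "real (k+2) \<le> a * (C3 + L)" unfolding a_def using i1 i2 by linarith
  qed
  define \<eta> where "\<eta> = (\<alpha> * \<rho> - \<rho>1) / (2 * \<rho>1 * a)"
  have etap: "\<eta> > 0" unfolding \<eta>_def using r1b r1p ap by (intro divide_pos_pos) auto
  have eta_eq: "\<rho>1 * (\<eta> * a) = (\<alpha> * \<rho> - \<rho>1) / 2" unfolding \<eta>_def using r1p ap by (simp add: field_simps)
  obtain C4 where C4: "\<And>x. x \<ge> 1 \<Longrightarrow> \<alpha> * ln x \<le> \<eta> * x + C4"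
    using lnU[OF a0 etap] by auto
  define G where "G = \<rho>1 * (ln B + \<eta> * a * C3 + C4) + real K + 4"
  define L0 where "L0 = \<bar>2 * G / (\<alpha> * \<rho> - \<rho>1)\<bar> + 3 / (\<alpha> * \<rho>) + 1"
  have main: "co_J_tau \<delta> \<alpha> B r c / ereal (ln (1/\<delta>)) \<le> ereal (\<alpha> * \<rho>)"
    if dl: "0 < \<delta>" "\<delta> < min B 1" "ln (1/\<delta>) \<ge> L0" for \<delta>
  proof -
    define L where "L = ln (1/\<delta>)"
    have Lp: "L > 0" unfolding L_def using dl by simp
    have LL0: "L \<ge> L0" unfolding L_def using dl by simp
    have dB: "\<delta> \<le> B" using dl by simp
    have noel_k: "\<And>k. noel \<delta> \<alpha> B r (Nf c k) \<longleftrightarrow> Zk k \<le> ln B + \<alpha> * ln (real (k+2)) + L"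
      unfolding Zk_def L_def by (rule noel_iff[OF B0 dl(1)])
    define k0 where "k0 = nat \<lceil>a * (C3 + L)\<rceil>"
    have "\<not> noel \<delta> \<alpha> B r (Nf c k0)"
    proof
      assume "noel \<delta> \<alpha> B r (Nf c k0)"
      then have "real (k0+2) \<le> a * (C3 + L)" using III noel_k by blast
      moreover have "real k0 \<ge> a * (C3 + L)" unfolding k0_def by linarith
      ultimately show False by simp
    qed
    have cle: "\<And>a k. a \<in> {1,2} \<Longrightarrow> c a k \<le> 1" using cb by auto
    obtain ks J where ks: "\<forall>j<ks. noel \<delta> \<alpha> B r (Nf c j)" "co_J_tau \<delta> \<alpha> B r c = ereal J"
      "J \<le> total_cost c (Nf c ks) + 1"
      using co_J_tau_bound[OF dl(1) dB _ \<open>\<not> noel \<delta> \<alpha> B r (Nf c k0)\<close> cle] a0 by fastforce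
    have Jb: "J \<le> \<alpha> * \<rho> * L"
    proof (cases ks)
      case 0
      have "J \<le> 3" using ks(3) Jl[of 0] unfolding Jk_def 0 by simp
      moreover have "3 / (\<alpha> * \<rho>) \<le> L" using LL0 unfolding L0_def by linarith
      then have "3 \<le> \<alpha> * \<rho> * L" using a0 rho0 by (simp add: divide_le_eq mult.commute)
      ultimately show ?thesis by linarith
    next
      case (Suc j)
      have nj: "Zk j \<le> ln B + \<alpha> * ln (real (j+2)) + L" using ks(1) Suc noel_k by blast
      have "Jk (Suc j) \<le> Jk j + 1" unfolding Jk_def by (rule total_cost_Nf_Suc[OF cle])
      then have "J \<le> Jk j + 2" using ks(3) Suc unfolding Jk_def by simp
      also have "\<dots> \<le> \<rho>1 * Zk j + real K + 4" using I[of j] by simp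
      also have "\<dots> \<le> \<rho>1 * (ln B + \<alpha> * ln (real (j+2)) + L) + real K + 4"
        using nj r1p by (simp add: mult_left_mono)
      also have "\<dots> \<le> \<rho>1 * (ln B + (\<eta> * (a * (C3 + L)) + C4) + L) + real K + 4"
      proof -
        have "\<alpha> * ln (real (j+2)) \<le> \<eta> * real (j+2) + C4" by (rule C4) simp
        also have "\<dots> \<le> \<eta> * (a * (C3 + L)) + C4" using III[OF nj] etap by (simp add: mult_left_mono)
        finally show ?thesis using r1p by (simp add: mult_left_mono)
      qed
      also have "\<dots> = (\<rho>1 + \<rho>1 * (\<eta> * a)) * L + G" unfolding G_def by (simp add: algebra_simps)
      also have "\<dots> = ((\<alpha> * \<rho> + \<rho>1)/2) * L + G" unfolding eta_eq by (simp add: field_simps)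
      also have "\<dots> \<le> \<alpha> * \<rho> * L"
      proof -
        have g: "\<alpha> * \<rho> - \<rho>1 > 0" using r1b by simp
        have "3/(\<alpha> * \<rho>) \<ge> 0" using a0 rho0 by simp
        then have "2 * G / (\<alpha> * \<rho> - \<rho>1) \<le> L" using LL0 abs_ge_self[of "2 * G / (\<alpha> * \<rho> - \<rho>1)"] unfolding L0_def by linarith
        then have "2 * G \<le> (\<alpha> * \<rho> - \<rho>1) * L" using g by (simp add: divide_le_eq mult.commute)
        then show ?thesis by (simp add: field_simps)
      qed
      finally show ?thesis .
    qed
    have "co_J_tau \<delta> \<alpha> B r c / ereal (ln (1/\<delta>)) = ereal (J / L)"
      using ks(2) Lp unfolding L_def by simp
    moreover have "J / L \<le> \<alpha> * \<rho>" using Jb Lp by (simp add: divide_le_eq)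
    ultimately show ?thesis by simp
  qed
  have evd: "eventually (\<lambda>\<delta>. 0 < \<delta> \<and> \<delta> < min B 1 \<and> ln (1/\<delta>) \<ge> L0) (at_right (0::real))"
  proof -
    have e1: "eventually (\<lambda>\<delta>. \<delta> \<in> {0<..<min B 1}) (at_right (0::real))"
      by (rule eventually_at_right_real) (use B0 in simp)
    have e2: "eventually (\<lambda>\<delta>. ln (1/\<delta>) \<ge> L0) (at_right (0::real))"
      using L_lim unfolding filterlim_at_top by blast
    show ?thesis using eventually_conj[OF e1 e2] by (rule eventually_mono) auto
  qed
  have "Limsup (at_right 0) (\<lambda>\<delta>. co_J_tau \<delta> \<alpha> B r c / ereal (ln (1/\<delta>))) \<le> ereal (\<alpha> * \<rho>)"
    by (rule Limsup_bounded) (use evd main in \<open>auto elim: eventually_mono\<close>)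
  moreover have "\<alpha> * \<rho> = 2 * \<alpha> * (sqrt (cm 1) + sqrt (cm 2))^2 / (\<mu> 1 - \<mu> 2)^2"
    unfolding \<rho>_def by simp
  ultimately show ?thesis by simp
qed

end



lemma (in prob_space) slln_tail:
  fixes X :: "nat \<Rightarrow> 'a \<Rightarrow> real"
  assumes meas: "\<And>k. X k \<in> borel_measurable M"
    and tail: "\<And>\<epsilon>. \<epsilon> > 0 \<Longrightarrow> summable (\<lambda>n. prob {\<omega>\<in>space M. \<bar>(\<Sum>k<n. X k \<omega>) / real n - m\<bar> \<ge> \<epsilon>})"
  shows "AE \<omega> in M. (\<lambda>n. (\<Sum>k<n. X k \<omega>) / real n) \<longlonglongrightarrow> m"
proof -
  define A where "A = (\<lambda>j n. {\<omega>\<in>space M. \<bar>(\<Sum>k<n. X k \<omega>) / real n - m\<bar> \<ge> 1 / real (Suc j)})"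
  have Asets: "A j n \<in> sets M" for j n
    unfolding A_def using meas by measurable
  have ae: "AE \<omega> in M. eventually (\<lambda>n. \<omega> \<in> space M - A j n) sequentially" for j
    by (rule borel_cantelli_AE1) (use Asets tail[of "1 / real (Suc j)"] in \<open>auto simp: A_def emeasure_eq_measure\<close>)
  then have "AE \<omega> in M. \<forall>j. eventually (\<lambda>n. \<omega> \<in> space M - A j n) sequentially"
    by (subst AE_all_countable) blast
  then show ?thesis
  proof (rule AE_mp[OF _ AE_I2], intro impI)
    fix \<omega> assume \<omega>: "\<omega> \<in> space M" and ev: "\<forall>j. eventually (\<lambda>n. \<omega> \<in> space M - A j n) sequentially"
    show "(\<lambda>n. (\<Sum>k<n. X k \<omega>) / real n) \<longlonglongrightarrow> m"
      unfolding LIMSEQ_iff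
    proof (intro allI impI)
      fix e :: real assume e: "e > 0"
      obtain j where j: "inverse (real (Suc j)) < e" using reals_Archimedean[OF e] by blast
      obtain no where no: "\<And>n. n \<ge> no \<Longrightarrow> \<omega> \<in> space M - A j n"
        using ev[rule_format, of j] unfolding eventually_sequentially by blast
      show "\<exists>no. \<forall>n\<ge>no. norm ((\<Sum>k<n. X k \<omega>) / real n - m) < e"
      proof (intro exI[of _ no] allI impI)
        fix n assume "n \<ge> no"
        then have "\<bar>(\<Sum>k<n. X k \<omega>) / real n - m\<bar> < 1 / real (Suc j)" using no[of n] \<omega> unfolding A_def by (simp add: not_le)
        then show "norm ((\<Sum>k<n. X k \<omega>) / real n - m) < e" using j by (simp add: inverse_eq_divide)
      qed
    qed
  qed
qed




lemma (in prob_space) rv_from_ind: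
  assumes ind: "indep_vars (\<lambda>_. borel) (\<lambda>(a, k, b). if b then R a k else C a k) ({1, 2} \<times> UNIV \<times> UNIV)"
    and a: "a \<in> {1,2}"
  shows "random_variable borel (R a k)" "random_variable borel (C a k)"
proof -
  have "\<forall>i\<in>{1, 2} \<times> UNIV \<times> UNIV. random_variable borel ((\<lambda>(a, k, b). if b then R a k else C a k) i)"
    using ind unfolding indep_vars_def by blast
  from this[rule_format, of "(a,k,True)"] this[rule_format, of "(a,k,False)"] a
  show "random_variable borel (R a k)" "random_variable borel (C a k)" by auto
qed

lemma (in prob_space) cost_slln:
  assumes ind: "indep_vars (\<lambda>_. borel) (\<lambda>(a, k, b). if b then R a k else C a k) ({1, 2} \<times> UNIV \<times> UNIV)"
    and a: "a \<in> {1,2}"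
    and dist: "\<And>k. distr M borel (C a k) = distr M borel (C a 0)"
    and AEb: "AE \<omega> in M. C a 0 \<omega> \<in> {0..1}"
  shows "AE \<omega> in M. (\<lambda>n. (\<Sum>k<n. C a k \<omega>) / real n) \<longlonglongrightarrow> expectation (C a 0)"
proof (rule slln_tail)
  fix k show "C a k \<in> borel_measurable M" using rv_from_ind[OF ind a] by simp
next
  fix \<epsilon> :: real assume e: "\<epsilon> > 0"
  define F where "F = (\<lambda>(a, k, b). if b then R a k else C a k)"
  have bnd: "prob {\<omega>\<in>space M. \<bar>(\<Sum>k<n. C a k \<omega>) / real n - expectation (C a 0)\<bar> \<ge> \<epsilon>} \<le> 2 * exp (- 2 * \<epsilon>^2) ^ n"
    if n: "n \<ge> 1" for n
  proof -
    define I where "I = (\<lambda>k. (a,k,False)) ` {..<n}"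
    have inj: "inj_on (\<lambda>k. (a,k,False)) {..<n}" by (auto simp: inj_on_def)
    have cI: "card I = n" unfolding I_def using card_image[OF inj] by simp
    have IS: "I \<subseteq> {1, 2} \<times> UNIV \<times> UNIV" unfolding I_def using a by auto
    have loc: "Hoeffding_ineq_iid M I F (C a 0) 0 1"
      unfolding Hoeffding_ineq_iid_def iid_interval_bounded_random_variables_def
        iid_interval_bounded_random_variables_axioms_def
    proof (intro conjI allI impI ballI)
      show "prob_space M" by (rule prob_space_axioms)
      show "finite I" unfolding I_def by simp
      show "indep_vars (\<lambda>_. borel) F I" using indep_vars_subset[OF ind IS] unfolding F_def .
      show "distr M borel (F i) = distr M borel (C a 0)" if "i \<in> I" for i
        using that dist unfolding I_def F_def by auto
      show "random_variable borel (C a 0)" using rv_from_ind[OF ind a] by simp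
      show "AE x in M. C a 0 x \<in> {0..1}" by (rule AEb)
    qed
    have Ine: "I \<noteq> {}" using n unfolding I_def by (auto simp: lessThan_empty_iff)
    have H: "prob {x \<in> space M. \<epsilon> \<le> \<bar>(\<Sum>i\<in>I. F i x) / real (card I) - expectation (C a 0)\<bar>}
       \<le> 2 * exp (- 2 * real (card I) * \<epsilon>\<^sup>2 / (1 - 0)\<^sup>2)"
      using Hoeffding_ineq_iid.Hoeffding_ineq_abs_ge'[OF loc, of \<epsilon>] e Ine by simp
    have sumeq: "(\<Sum>i\<in>I. F i x) = (\<Sum>k<n. C a k x)" for x
      unfolding I_def F_def by (subst sum.reindex[OF inj]) simp
    have "exp (- 2 * real n * \<epsilon>\<^sup>2 / (1 - 0)\<^sup>2) = exp (- 2 * \<epsilon>^2) ^ n"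
      using exp_of_nat_mult[of n "- 2 * \<epsilon>^2"] by (simp add: mult_ac)
    then show ?thesis using H unfolding sumeq cI by simp
  qed
  have sg: "summable (\<lambda>n. 2 * exp (- 2 * \<epsilon>^2) ^ n)"
    by (intro summable_mult summable_geometric) (use e in simp)
  show "summable (\<lambda>n. prob {\<omega>\<in>space M. \<bar>(\<Sum>k<n. C a k \<omega>) / real n - expectation (C a 0)\<bar> \<ge> \<epsilon>})"
    by (rule summable_comparison_test'[OF sg, of 1]) (use bnd in simp)
qed




lemma (in prob_space) reward_slln:
  assumes ind: "indep_vars (\<lambda>_. borel) (\<lambda>(a, k, b). if b then R a k else C a k) ({1, 2} \<times> UNIV \<times> UNIV)"
    and a: "a \<in> {1,2}"
    and nd: "\<And>k. distributed M lborel (R a k) (\<lambda>x. ennreal (normal_density m0 1 x))"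
  shows "AE \<omega> in M. (\<lambda>n. (\<Sum>k<n. R a k \<omega>) / real n) \<longlonglongrightarrow> m0"
proof (rule slln_tail)
  fix k show "R a k \<in> borel_measurable M" using rv_from_ind[OF ind a] by simp
next
  fix \<epsilon> :: real assume e: "\<epsilon> > 0"
  define F where "F = (\<lambda>(a, k, b). if b then R a k else C a k)"
  have bnd: "prob {\<omega>\<in>space M. \<bar>(\<Sum>k<n. R a k \<omega>) / real n - m0\<bar> \<ge> \<epsilon>} \<le> 3 / \<epsilon>^4 * inverse (real n ^ 2)"
    if n: "n \<ge> 1" for n
  proof -
    define I where "I = (\<lambda>k. (a,k,True)) ` {..<n}"
    have inj: "inj_on (\<lambda>k. (a,k,True)) {..<n}" by (auto simp: inj_on_def)
    have cI: "card I = n" unfolding I_def using card_image[OF inj] by simp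
    have IS: "I \<subseteq> {1, 2} \<times> UNIV \<times> UNIV" unfolding I_def using a by auto
    have Ine: "I \<noteq> {}" using n unfolding I_def by (auto simp: lessThan_empty_iff)
    have sumeq: "(\<Sum>i\<in>I. F i x) = (\<Sum>k<n. R a k x)" for x
      unfolding I_def F_def by (subst sum.reindex[OF inj]) simp
    have d0: "distributed M lborel (\<lambda>x. \<Sum>i\<in>I. F i x)
       (\<lambda>x. ennreal (normal_density (\<Sum>i\<in>I. m0) (sqrt (\<Sum>i\<in>I. 1\<^sup>2)) x))"
      by (rule sum_indep_normal[of I F "\<lambda>_. 1" "\<lambda>_. m0"])
         (use Ine indep_vars_subset[OF ind IS] nd in \<open>auto simp: I_def F_def\<close>)
    define S where "S = (\<lambda>x. \<Sum>k<n. R a k x)"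
    define m where "m = real n * m0"
    define \<sigma> where "\<sigma> = sqrt (real n)"
    have sp: "\<sigma> > 0" unfolding \<sigma>_def using n by simp
    have dS: "distributed M lborel S (\<lambda>x. ennreal (normal_density m \<sigma> x))"
      using d0 unfolding sumeq cI S_def m_def \<sigma>_def by (simp add: cI)
    have hb: "has_bochner_integral lborel (\<lambda>x. normal_density m \<sigma> x * (x - m) ^ (2 * 2)) (fact (2 * 2) / ((2 / \<sigma>\<^sup>2)^2 * fact 2))"
      by (rule normal_moment_even[OF sp])
    have val: "fact (2 * 2) / ((2 / \<sigma>\<^sup>2)^2 * fact 2) = 3 * real n ^ 2"
      using sp unfolding \<sigma>_def by (simp add: fact_numeral power2_eq_square field_simps)
    have g4: "(\<lambda>x. (x - m) ^ 4) \<in> borel_measurable lborel" by measurable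
    have intl: "integrable lborel (\<lambda>x. normal_density m \<sigma> x * (x - m) ^ 4)"
      using hb by (simp add: has_bochner_integral_iff)
    have intM: "integrable M (\<lambda>x. (S x - m) ^ 4)"
      using distributed_integrable[OF dS g4] intl by simp
    have intval: "(\<integral>x. (S x - m) ^ 4 \<partial>M) = 3 * real n ^ 2"
    proof -
      have "(\<integral>x. normal_density m \<sigma> x * (x - m) ^ 4 \<partial>lborel) = (\<integral>x. (S x - m) ^ 4 \<partial>M)"
        by (rule distributed_integral[OF dS g4]) simp
      moreover have "(\<integral>x. normal_density m \<sigma> x * (x - m) ^ 4 \<partial>lborel) = 3 * real n ^ 2"
        using hb val by (simp add: has_bochner_integral_iff)
      ultimately show ?thesis by simp
    qed
    have ne: "real n * \<epsilon> > 0" using n e by simp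
    have mk: "prob {x\<in>space M. (real n * \<epsilon>)^4 \<le> (S x - m) ^ 4} \<le> (3 * real n ^ 2) / (real n * \<epsilon>)^4"
      using integral_Markov_inequality_measure[OF intM sets.top, of "(real n * \<epsilon>)^4"] ne intval n e by simp
    have Smeas: "S \<in> borel_measurable M" using distributed_measurable[OF dS] by simp
    have sub: "{\<omega>\<in>space M. \<bar>(\<Sum>k<n. R a k \<omega>) / real n - m0\<bar> \<ge> \<epsilon>} \<subseteq> {x\<in>space M. (real n * \<epsilon>)^4 \<le> (S x - m) ^ 4}"
    proof safe
      fix x assume x: "x \<in> space M" and h: "\<epsilon> \<le> \<bar>(\<Sum>k<n. R a k x) / real n - m0\<bar>"
      have np: "real n > 0" using n by simp
      have "(\<Sum>k<n. R a k x) / real n - m0 = (S x - m) / real n"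
        unfolding S_def m_def using np by (simp add: field_simps)
      then have "\<epsilon> \<le> \<bar>S x - m\<bar> / real n" using h np by simp
      then have "real n * \<epsilon> \<le> \<bar>S x - m\<bar>" using np by (simp add: field_simps)
      then have "(real n * \<epsilon>)^4 \<le> \<bar>S x - m\<bar>^4" using ne by (intro power_mono) auto
      then show "(real n * \<epsilon>)^4 \<le> (S x - m) ^ 4" by (simp add: power_even_abs)
    qed
    have "prob {\<omega>\<in>space M. \<bar>(\<Sum>k<n. R a k \<omega>) / real n - m0\<bar> \<ge> \<epsilon>} \<le> prob {x\<in>space M. (real n * \<epsilon>)^4 \<le> (S x - m) ^ 4}"
      by (rule finite_measure_mono[OF sub]) (use Smeas in measurable)
    also have "\<dots> \<le> (3 * real n ^ 2) / (real n * \<epsilon>)^4" by (rule mk)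
    also have "\<dots> = 3 / \<epsilon>^4 * inverse (real n ^ 2)"
      using ne n e by (simp add: field_simps power_mult_distrib)
    finally show ?thesis .
  qed
  have sg: "summable (\<lambda>n. 3 / \<epsilon>^4 * inverse (real n ^ 2))"
    by (intro summable_mult inverse_power_summable) simp
  show "summable (\<lambda>n. prob {\<omega>\<in>space M. \<bar>(\<Sum>k<n. R a k \<omega>) / real n - m0\<bar> \<ge> \<epsilon>})"
    by (rule summable_comparison_test'[OF sg, of 1]) (use bnd in simp)
qed



theorem theorem3:
  fixes M :: "'w measure" and R C :: "nat \<Rightarrow> nat \<Rightarrow> 'w \<Rightarrow> real"
    and \<mu> c :: "nat \<Rightarrow> real" and l \<alpha> B :: real
  assumes "prob_space M"
    and "1 < \<alpha>" and "\<alpha> < exp 1 / 2" and "0 < B" and "0 < l"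
    and "\<mu> 1 \<noteq> \<mu> 2"
    and "prob_space.indep_vars M (\<lambda>_. borel)
           (\<lambda>(a, k, b). if b then R a k else C a k) ({1, 2} \<times> UNIV \<times> UNIV)"
    and "\<And>a k. a \<in> {1, 2} \<Longrightarrow>
           distributed M lborel (R a k) (\<lambda>x. ennreal (normal_density (\<mu> a) 1 x))"
    and "\<And>a k. a \<in> {1, 2} \<Longrightarrow> C a k \<in> borel_measurable M"
    and "\<And>a k. a \<in> {1, 2} \<Longrightarrow> distr M borel (C a k) = distr M borel (C a 0)"
    and "\<And>a k. a \<in> {1, 2} \<Longrightarrow> (AE \<omega> in M. C a k \<omega> \<in> {l..1})"
    and "\<And>a k. a \<in> {1, 2} \<Longrightarrow> prob_space.expectation M (C a k) = c a"
  shows "AE \<omega> in M.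
           Limsup (at_right 0)
             (\<lambda>\<delta>. co_J_tau \<delta> \<alpha> B (\<lambda>a k. R a k \<omega>) (\<lambda>a k. C a k \<omega>) / ereal (ln (1 / \<delta>)))
           \<le> ereal (2 * \<alpha> * (sqrt (c 1) + sqrt (c 2))^2 / (\<mu> 1 - \<mu> 2)^2)"
proof -
  interpret P: prob_space M by (rule assms(1))
  note ind = assms(7)
  have AEc: "AE \<omega> in M. (\<lambda>n. (\<Sum>k<n. C a k \<omega>) / real n) \<longlonglongrightarrow> c a" if a: "a \<in> {1,2}" for a
  proof -
    have "AE \<omega> in M. C a 0 \<omega> \<in> {0..1}"
      using assms(11)[OF a, of 0] assms(5) by (auto elim: eventually_mono)
    from P.cost_slln[OF ind a assms(10)[OF a] this] show ?thesis
      using assms(12)[OF a, of 0] by simp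
  qed
  have AEr: "AE \<omega> in M. (\<lambda>n. (\<Sum>k<n. R a k \<omega>) / real n) \<longlonglongrightarrow> \<mu> a" if a: "a \<in> {1,2}" for a
    by (rule P.reward_slln[OF ind a assms(8)[OF a]])
  have AEb: "AE \<omega> in M. \<forall>a k. a \<in> {1,2} \<longrightarrow> C a k \<omega> \<in> {l..1}"
  proof -
    have "AE \<omega> in M. \<forall>k. C a k \<omega> \<in> {l..1}" if a: "a \<in> {1,2}" for a
      using assms(11)[OF a] by (subst AE_all_countable) blast
    then have "AE \<omega> in M. \<forall>k. C 1 k \<omega> \<in> {l..1}" "AE \<omega> in M. \<forall>k. C 2 k \<omega> \<in> {l..1}" by auto
    then show ?thesis by eventually_elim auto
  qed
  have all: "AE \<omega> in M. (\<forall>a k. a \<in> {1,2} \<longrightarrow> C a k \<omega> \<in> {l..1})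
     \<and> (\<lambda>n. (\<Sum>k<n. C 1 k \<omega>) / real n) \<longlonglongrightarrow> c 1 \<and> (\<lambda>n. (\<Sum>k<n. C 2 k \<omega>) / real n) \<longlonglongrightarrow> c 2
     \<and> (\<lambda>n. (\<Sum>k<n. R 1 k \<omega>) / real n) \<longlonglongrightarrow> \<mu> 1 \<and> (\<lambda>n. (\<Sum>k<n. R 2 k \<omega>) / real n) \<longlonglongrightarrow> \<mu> 2"
  proof -
    have c1: "AE \<omega> in M. (\<lambda>n. (\<Sum>k<n. C 1 k \<omega>) / real n) \<longlonglongrightarrow> c 1" by (rule AEc) simp
    have c2: "AE \<omega> in M. (\<lambda>n. (\<Sum>k<n. C 2 k \<omega>) / real n) \<longlonglongrightarrow> c 2" by (rule AEc) simp
    have r1: "AE \<omega> in M. (\<lambda>n. (\<Sum>k<n. R 1 k \<omega>) / real n) \<longlonglongrightarrow> \<mu> 1" by (rule AEr) simp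
    have r2: "AE \<omega> in M. (\<lambda>n. (\<Sum>k<n. R 2 k \<omega>) / real n) \<longlonglongrightarrow> \<mu> 2" by (rule AEr) simp
    show ?thesis using AEb c1 c2 r1 r2 by eventually_elim auto
  qed
  show ?thesis
    using all
  proof eventually_elim
    case (elim \<omega>)
    have tr: "traj (\<lambda>a k. C a k \<omega>) (\<lambda>a k. R a k \<omega>) c \<mu> l"
    proof (unfold traj_def, intro conjI allI impI)
      show "0 < l" by (rule assms(5))
    next
      fix a k assume a: "a \<in> {1::nat,2}"
      show "C a k \<omega> \<in> {l..1}" using elim a by blast
    next
      fix a assume a: "a \<in> {1::nat,2}"
      then consider "a = 1" | "a = 2" by blast
      then show "(\<lambda>n. emp (\<lambda>a k. C a k \<omega>) a n) \<longlonglongrightarrow> c a"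
        using elim by cases (simp_all add: emp_def)
    next
      fix a assume a: "a \<in> {1::nat,2}"
      then consider "a = 1" | "a = 2" by blast
      then show "(\<lambda>n. emp (\<lambda>a k. R a k \<omega>) a n) \<longlonglongrightarrow> \<mu> a"
        using elim by cases (simp_all add: emp_def)
    qed
    show ?case by (rule traj.det_main[OF tr assms(2) assms(4) assms(6)])
  qed
qed

end
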